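(* Let $G$ be an almost well-covered graph. Then $G_2$ is a complete graph (equivalently, the vertices of type $2$ are pairwise adjacent).
   Context: All graphs are finite and simple. For a graph $G$, $\alpha(G)$ is the maximum size of an independent set and $i(G)$ the minimum size of an inclusion-maximal independent set; $G$ is almost well-covered if $\alpha(G)-i(G)=1$. Types of vertices: let $U$ be the set of vertices of $G$ whose connected component is a complete graph. In $G-U$, vertices of degree $1$ are leaves and the others are internal vertices. An internal vertex adjacent to exactly $k$ leaves is of type $k$; every vertex of $U$ is of type $0$. $G_2$ denotes the subgraph of $G$ induced by all vertices of type $2$ (the null graph counts as complete). *)

theory Defs
  imports Main
begin

definition graph :: "'a set \<Rightarrow> ('a \<Rightarrow> 'a \<Rightarrow> bool) \<Rightarrow> bool" where
  "graph V E \<longleftrightarrow> finite V \<and> (\<forall>x y. E x y \<longrightarrow> x \<in> V \<and> y \<in> V)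
     \<and> (\<forall>x y. E x y \<longrightarrow> E y x) \<and> (\<forall>x. \<not> E x x)"

definition indep :: "'a set \<Rightarrow> ('a \<Rightarrow> 'a \<Rightarrow> bool) \<Rightarrow> 'a set \<Rightarrow> bool" where
  "indep V E S \<longleftrightarrow> S \<subseteq> V \<and> (\<forall>x\<in>S. \<forall>y\<in>S. \<not> E x y)"

definition maximal_indep :: "'a set \<Rightarrow> ('a \<Rightarrow> 'a \<Rightarrow> bool) \<Rightarrow> 'a set \<Rightarrow> bool" where
  "maximal_indep V E S \<longleftrightarrow> indep V E S \<and> (\<forall>T. indep V E T \<longrightarrow> S \<subseteq> T \<longrightarrow> T = S)"

definition alpha :: "'a set \<Rightarrow> ('a \<Rightarrow> 'a \<Rightarrow> bool) \<Rightarrow> nat" where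
  "alpha V E = Max (card ` {S. indep V E S})"

definition idom :: "'a set \<Rightarrow> ('a \<Rightarrow> 'a \<Rightarrow> bool) \<Rightarrow> nat" where
  "idom V E = Min (card ` {S. maximal_indep V E S})"

definition almost_well_covered :: "'a set \<Rightarrow> ('a \<Rightarrow> 'a \<Rightarrow> bool) \<Rightarrow> bool" where
  "almost_well_covered V E \<longleftrightarrow> alpha V E - idom V E = 1"

definition component :: "('a \<Rightarrow> 'a \<Rightarrow> bool) \<Rightarrow> 'a \<Rightarrow> 'a set" where
  "component E x = {y. E\<^sup>*\<^sup>* x y}"

definition Uset :: "'a set \<Rightarrow> ('a \<Rightarrow> 'a \<Rightarrow> bool) \<Rightarrow> 'a set" where
  "Uset V E = {x \<in> V. \<forall>y\<in>component E x. \<forall>z\<in>component E x. y \<noteq> z \<longrightarrow> E y z}"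

definition degGU :: "'a set \<Rightarrow> ('a \<Rightarrow> 'a \<Rightarrow> bool) \<Rightarrow> 'a \<Rightarrow> nat" where
  "degGU V E x = card {y \<in> V - Uset V E. E x y}"

definition leaf :: "'a set \<Rightarrow> ('a \<Rightarrow> 'a \<Rightarrow> bool) \<Rightarrow> 'a \<Rightarrow> bool" where
  "leaf V E x \<longleftrightarrow> x \<in> V - Uset V E \<and> degGU V E x = 1"

definition internal :: "'a set \<Rightarrow> ('a \<Rightarrow> 'a \<Rightarrow> bool) \<Rightarrow> 'a \<Rightarrow> bool" where
  "internal V E x \<longleftrightarrow> x \<in> V - Uset V E \<and> degGU V E x \<noteq> 1"

definition has_type :: "'a set \<Rightarrow> ('a \<Rightarrow> 'a \<Rightarrow> bool) \<Rightarrow> nat \<Rightarrow> 'a \<Rightarrow> bool" where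
  "has_type V E k x \<longleftrightarrow>
     (internal V E x \<and> card {y. leaf V E y \<and> E x y} = k) \<or> (x \<in> Uset V E \<and> k = 0)"

definition type2 :: "'a set \<Rightarrow> ('a \<Rightarrow> 'a \<Rightarrow> bool) \<Rightarrow> 'a set" where
  "type2 V E = {x. has_type V E 2 x}"

end

theory Submission
  imports Defs
begin

lemma leaf_nbr:
  assumes g: "graph V E" and l: "leaf V E a" and ex: "E x a" and xU: "x \<in> V - Uset V E"
    and ez: "E a z"
  shows "z = x"
proof -
  have sym: "\<And>u v. E u v \<Longrightarrow> E v u" and inV: "\<And>u v. E u v \<Longrightarrow> u \<in> V \<and> v \<in> V"
    using g unfolding graph_def by auto
  have fin: "finite V" using g unfolding graph_def by auto
  show ?thesis
  proof (cases "z \<in> Uset V E")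
    case False
    have c1: "card {w \<in> V - Uset V E. E a w} = 1" using l unfolding leaf_def degGU_def by auto
    have "x \<in> {w \<in> V - Uset V E. E a w}" using xU sym[OF ex] by auto
    moreover have "z \<in> {w \<in> V - Uset V E. E a w}" using False ez inV by auto
    moreover have "finite {w \<in> V - Uset V E. E a w}" using fin by auto
    ultimately show ?thesis using c1 by (metis card_1_singletonE singletonD)
  next
    case True
    have zx: "E\<^sup>*\<^sup>* z x" using sym[OF ez] sym[OF ex] by (meson converse_rtranclp_into_rtranclp rtranclp.rtrancl_refl)
    have sub: "component E x \<subseteq> component E z"
      unfolding component_def using zx by (auto intro: rtranclp_trans)
    have "x \<in> Uset V E" using True sub xU unfolding Uset_def by blast
    with xU show ?thesis by auto
  qed
qed

lemma type2_props:
  assumes "x \<in> type2 V E"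
  shows "x \<in> V - Uset V E" "card {y. leaf V E y \<and> E x y} = 2"
  using assms unfolding type2_def has_type_def internal_def by auto

theorem lemma7:
  assumes "graph V E"
    and "almost_well_covered V E"
  shows "\<forall>x\<in>type2 V E. \<forall>y\<in>type2 V E. x \<noteq> y \<longrightarrow> E x y"
proof (intro ballI impI, rule ccontr)
  fix x y assume xt: "x \<in> type2 V E" and yt: "y \<in> type2 V E" and xy: "x \<noteq> y" and nxy: "\<not> E x y"
  have g: "graph V E" by fact
  have sym: "\<And>u v. E u v \<Longrightarrow> E v u" and inV: "\<And>u v. E u v \<Longrightarrow> u \<in> V \<and> v \<in> V"
    and irr: "\<And>u. \<not> E u u" and fin: "finite V"
    using g unfolding graph_def by auto
  have xU: "x \<in> V - Uset V E" and yU: "y \<in> V - Uset V E"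
    using type2_props(1)[OF xt] type2_props(1)[OF yt] by auto
  obtain a1 a2 where a: "a1 \<noteq> a2" "{w. leaf V E w \<and> E x w} = {a1, a2}"
    using type2_props(2)[OF xt] by (meson card_2_iff)
  obtain b1 b2 where b: "b1 \<noteq> b2" "{w. leaf V E w \<and> E y w} = {b1, b2}"
    using type2_props(2)[OF yt] by (meson card_2_iff)
  have la: "\<And>w. w \<in> {a1,a2} \<Longrightarrow> leaf V E w \<and> E x w" using a by blast
  have lb: "\<And>w. w \<in> {b1,b2} \<Longrightarrow> leaf V E w \<and> E y w" using b by blast
  have na: "\<And>w z. w \<in> {a1,a2} \<Longrightarrow> E w z \<Longrightarrow> z = x"
    using la leaf_nbr[OF g _ _ xU] by blast
  have nb: "\<And>w z. w \<in> {b1,b2} \<Longrightarrow> E w z \<Longrightarrow> z = y"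
    using lb leaf_nbr[OF g _ _ yU] by blast
  have ab: "{a1,a2} \<inter> {b1,b2} = {}"
  proof (rule ccontr)
    assume "{a1,a2} \<inter> {b1,b2} \<noteq> {}"
    then obtain w where w: "w \<in> {a1,a2}" "w \<in> {b1,b2}" by blast
    have "E w y" using lb[OF w(2)] sym by blast
    hence "y = x" using na[OF w(1)] by blast
    with xy show False by simp
  qed
  have LV: "{a1,a2,b1,b2} \<subseteq> V" using la lb inV by blast
  have Lxy: "{a1,a2,b1,b2} \<inter> {x,y} = {}"
    using la lb irr nxy sym by blast
  define A where "A = {S. indep V E S \<and> {x,y} \<subseteq> S}"
  have finA: "finite A" unfolding A_def indep_def using fin
    by (metis (no_types, lifting) Collect_mono Pow_def finite_Collect_subsets rev_finite_subset)
  have "{x,y} \<in> A" unfolding A_def indep_def using xU yU nxy sym irr by blast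
  then obtain W where WA: "W \<in> A" and Wm: "\<forall>S\<in>A. W \<subseteq> S \<longrightarrow> S = W"
    using finite_has_maximal[OF finA] by blast
  have Wi: "indep V E W" and xyW: "{x,y} \<subseteq> W" using WA unfolding A_def by auto
  have Wmax: "maximal_indep V E W"
    unfolding maximal_indep_def using Wi Wm xyW unfolding A_def by blast
  have finW: "finite W" using Wi fin unfolding indep_def by (meson finite_subset)
  define W' where "W' = (W - {x,y}) \<union> {a1,a2,b1,b2}"
  have W'i: "indep V E W'"
    unfolding indep_def
  proof (intro conjI ballI)
    show "W' \<subseteq> V" using Wi LV unfolding W'_def indep_def by blast
  next
    fix u v assume u: "u \<in> W'" and v: "v \<in> W'"
    show "\<not> E u v"
    proof
      assume e: "E u v"
      show False
      proof (cases "u \<in> {a1,a2,b1,b2}")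
        case True
        then have "v = x \<or> v = y" using na nb e by blast
        moreover have "v \<noteq> x \<and> v \<noteq> y" using v Lxy unfolding W'_def by blast
        ultimately show False by blast
      next
        case False
        show False
        proof (cases "v \<in> {a1,a2,b1,b2}")
          case True
          then have "u = x \<or> u = y" using na nb sym[OF e] by blast
          moreover have "u \<noteq> x \<and> u \<noteq> y" using u Lxy unfolding W'_def by blast
          ultimately show False by blast
        next
          case False2: False
          then have "u \<in> W" "v \<in> W" using u v False unfolding W'_def by auto
          then show False using Wi e unfolding indep_def by blast
        qed
      qed
    qed
  qed
  have c4: "card {a1,a2,b1,b2} = 4" using a(1) b(1) ab by auto
  have cW: "card (W - {x,y}) = card W - 2" using xyW finW xy
    by (simp add: card_Diff_subset)
  have cW2: "card W \<ge> 2" using xyW finW xy by (metis card_2_iff card_mono)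
  have LW: "{a1,a2,b1,b2} \<inter> W = {}"
  proof (rule ccontr)
    assume "{a1,a2,b1,b2} \<inter> W \<noteq> {}"
    then obtain w where w: "w \<in> {a1,a2,b1,b2}" "w \<in> W" by blast
    have "E x w \<or> E y w" using w(1) la lb by blast
    then show False using w(2) xyW Wi unfolding indep_def by blast
  qed
  have "card W' = card (W - {x,y}) + card {a1,a2,b1,b2}"
    unfolding W'_def using finW LW by (subst card_Un_disjoint) auto
  hence cW': "card W' = card W + 2" using c4 cW cW2 by simp
  have finS: "finite {S. S \<subseteq> V}" using fin by simp
  have fI: "finite (Collect (indep V E))"
    by (rule finite_subset[OF _ finS]) (auto simp: indep_def)
  have fM: "finite (Collect (maximal_indep V E))"
    by (rule finite_subset[OF _ finS]) (auto simp: maximal_indep_def indep_def)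
  have "alpha V E \<ge> card W'"
    unfolding alpha_def
    by (rule Max_ge) (use W'i fI in auto)
  moreover have "idom V E \<le> card W"
    unfolding idom_def
    by (rule Min_le) (use Wmax fM in auto)
  ultimately have "alpha V E \<ge> idom V E + 2" using cW' by simp
  with assms(2) show False unfolding almost_well_covered_def by simp
qed

end
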